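(* For every integer $k \geq 2$, there exists a $k$-de Bruijn L-array.
   Context: Fix an integer $k\ge 2$. Consider a $k \times k^2$ array $A$ with entries in $\{0,\dots,k-1\}$, with rows indexed by $i\in\{0,\dots,k-1\}$ and columns by $j\in\{0,\dots,k^2-1\}$, regarded cyclically (row indices taken mod $k$, column indices taken mod $k^2$, i.e. the left side is glued to the right side and the top to the bottom). An L-position is a pair $(i,j)$ with $0\le i\le k-1$, $0\le j\le k^2-1$; the L-filling read at $(i,j)$ is the triple $(a,b,d)=(A(i,j),\,A(i+1 \bmod k,\,j),\,A(i+1 \bmod k,\,j+1 \bmod k^2))$, i.e. a $2\times 2$ block with its upper-right cell removed: $a$ is the upper-left cell, $b$ the cell directly below $a$, and $d$ the cell directly to the right of $b$. There are $k^3$ L-positions and $k^3$ possible triples in $\{0,\dots,k-1\}^3$. The array $A$ is a $k$-de Bruijn L-array if every triple $(a,b,d)\in\{0,\dots,k-1\}^3$ is the L-filling read at exactly one L-position. *)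

theory Defs
  imports Main
begin

text \<open>A k x k^2 array is modelled as a function A :: nat => nat => nat; only the
entries A i j with i < k and j < k^2 matter, and all such entries must lie in {0..<k}.\<close>

definition is_array :: "nat \<Rightarrow> (nat \<Rightarrow> nat \<Rightarrow> nat) \<Rightarrow> bool" where
  "is_array k A \<longleftrightarrow> (\<forall>i<k. \<forall>j<k^2. A i j < k)"

definition L_filling :: "nat \<Rightarrow> (nat \<Rightarrow> nat \<Rightarrow> nat) \<Rightarrow> nat \<times> nat \<Rightarrow> nat \<times> nat \<times> nat" where
  "L_filling k A p = (case p of (i, j) \<Rightarrow>
     (A i j, A ((i + 1) mod k) j, A ((i + 1) mod k) ((j + 1) mod (k^2))))"

definition L_positions :: "nat \<Rightarrow> (nat \<times> nat) set" where
  "L_positions k = {0..<k} \<times> {0..<k^2}"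

definition de_Bruijn_L_array :: "nat \<Rightarrow> (nat \<Rightarrow> nat \<Rightarrow> nat) \<Rightarrow> bool" where
  "de_Bruijn_L_array k A \<longleftrightarrow> is_array k A \<and>
     (\<forall>a<k. \<forall>b<k. \<forall>d<k. \<exists>!p. p \<in> L_positions k \<and> L_filling k A p = (a, b, d))"

end

theory Submission imports Defs begin
lemma mod_eqI: fixes x y k :: nat and t :: int assumes "int x = int y + int k * t" shows "x mod k = y mod k"
proof -
  have "int x mod int k = int y mod int k" using assms by simp
  then show ?thesis by (metis of_nat_eq_iff zmod_int)
qed

lemma mh1: "(a + (x mod k)*y) mod (k::nat) = (a + x*y) mod k"
  by (metis mod_add_right_eq mod_mult_left_eq)
lemma mh2: "(a + x*(y mod k)) mod (k::nat) = (a + x*y) mod k"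
  by (metis mod_add_right_eq mod_mult_right_eq)
lemma mh3: "((x mod k) + a) mod (k::nat) = (x + a) mod k"
  by (metis mod_add_left_eq)
lemma mm: "x mod k = y mod k \<Longrightarrow> (x mod k) mod k = y mod (k::nat)" by simp
lemmas mh = mh1 mh2 mh3

definition Aw :: "nat \<Rightarrow> nat \<Rightarrow> nat \<Rightarrow> nat" where
  "Aw k i j = (j div k + i * (j mod k)) mod k"

lemma Aw_eval: "v < k \<Longrightarrow> Aw k i (u*k+v) = (u + i*v) mod k"
  by (simp add: Aw_def)

lemma surj_case1:
  assumes k: "k \<ge> 2" and ab: "a < k" "b < k" "d < k" and h: "a = (b+1) mod k"
  shows "\<exists>p\<in>L_positions k. L_filling k (Aw k) p = (a,b,d)"
proof -
  define u where "u = (d + (k-1)) mod k"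
  define i where "i = (d + (k-b) + (k-2)) mod k"
  define j where "j = u*k + (k-1)"
  have ik: "int (k-1) = int k - 1" "int (k-2) = int k - 2" "int (k-b) = int k - int b"
    using k ab by auto
  have uk: "u < k" "i < k" using k by (auto simp: u_def i_def)
  have jlt: "j + 1 = (u+1)*k" using k by (simp add: j_def)
  have jk: "j < k^2"
  proof -
    have "(u+1)*k \<le> k*k" using uk by (intro mult_le_mono1) simp
    then show ?thesis using jlt by (simp add: power2_eq_square)
  qed
  have i1: "(i+1) mod k = (d + (k-b) + (k-2) + 1) mod k" by (simp add: i_def mod_simps)
  have j1: "(j+1) mod k^2 = ((u+1) mod k)*k + 0"
  proof (cases "u+1 < k")
    case True
    then have "(u+1)*k < k*k" using k by (intro mult_less_mono1) auto
    then have "j + 1 < k^2" using jlt by (simp add: power2_eq_square)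
    then show ?thesis using True k by (simp add: j_def)
  next
    case False
    then have "u = k-1" using uk by simp
    then have "j+1 = k^2" using jlt k by (simp add: power2_eq_square)
    then show ?thesis using \<open>u = k-1\<close> k by simp
  qed
  have e1: "Aw k i j = a"
  proof -
    have "(d + (k-1) + (d + (k-b) + (k-2))*(k-1)) mod k = (b+1) mod k"
      by (rule mod_eqI[where t="int d - int b + 2*int k - 3"]) (simp only: of_nat_add of_nat_mult ik of_nat_1 of_nat_numeral, simp add: algebra_simps)
    moreover have "Aw k i j = (u + i*(k-1)) mod k" unfolding j_def using k by (intro Aw_eval) simp
    moreover have "(u + i*(k-1)) mod k = (d + (k-1) + (d + (k-b) + (k-2))*(k-1)) mod k"
      by (simp only: u_def i_def mh)
    ultimately show ?thesis using h by simp
  qed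
  have e2: "Aw k ((i+1) mod k) j = b"
  proof -
    have "(d + (k-1) + (d + (k-b) + (k-2) + 1)*(k-1)) mod k = b mod k"
      by (rule mod_eqI[where t="int d - int b + 2*int k - 2"]) (simp only: of_nat_add of_nat_mult ik of_nat_1 of_nat_numeral, simp add: algebra_simps)
    moreover have "Aw k ((i+1) mod k) j = (u + ((i+1) mod k)*(k-1)) mod k" unfolding j_def using k by (intro Aw_eval) simp
    moreover have "(u + ((i+1) mod k)*(k-1)) mod k = (d + (k-1) + (d + (k-b) + (k-2) + 1)*(k-1)) mod k"
      by (simp only: u_def i1 mh)
    ultimately show ?thesis using ab by simp
  qed
  have e3: "Aw k ((i+1) mod k) ((j+1) mod k^2) = d"
  proof -
    have "(d + (k-1) + 1) mod k = d mod k"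
      by (rule mod_eqI[where t="1"]) (use k in simp)
    moreover have "Aw k ((i+1) mod k) ((j+1) mod k^2) = ((u+1) mod k + ((i+1) mod k)*0) mod k" unfolding j1 using k by (intro Aw_eval) simp
    moreover have "((u+1) mod k + ((i+1) mod k)*0) mod k = (d + (k-1) + 1) mod k"
      by (simp only: u_def mh mult_0_right add_0_right) simp
    ultimately show ?thesis using ab by simp
  qed
  show ?thesis
  proof (rule bexI[where x="(i,j)"])
    show "L_filling k (Aw k) (i, j) = (a, b, d)" by (simp only: L_filling_def prod.case e1 e2 e3)
    show "(i, j) \<in> L_positions k" using uk jk by (simp add: L_positions_def)
  qed
qed
lemma surj_case2:
  assumes k: "k \<ge> 2" and ab: "a < k" "b < k" "d < k" and h: "a \<noteq> (b+1) mod k"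
  shows "\<exists>p\<in>L_positions k. L_filling k (Aw k) p = (a,b,d)"
proof -
  obtain p where p: "p + 1 = k" using k by (metis Nat.le_imp_diff_is_add add.commute le_trans one_le_numeral)
  obtain c where c: "b + c = k" using ab by (metis less_imp_add_positive)
  obtain e where e: "a + e = k" using ab by (metis less_imp_add_positive)
  have ip: "int p = int k - 1" "int c = int k - int b" "int e = int k - int a" using p c e by auto
  define v where "v = (b + e) mod k"
  define i' where "i' = (d + c) mod k"
  define i where "i = (d + c + p) mod k"
  define u where "u = (b + p*i'*v) mod k"
  define j where "j = u*k + v"
  have uk: "u < k" "i < k" "i' < k" "v < k" using k by (auto simp: u_def i_def i'_def v_def)
  have v1: "v + 1 < k"
  proof (rule ccontr)
    assume "\<not> v + 1 < k"
    then have "v = p" using uk p by simp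
    then have "(b + e) mod k + 1 = k" using p by (simp add: v_def)
    moreover have "(b + e + 1) mod k = ((b + e) mod k + 1) mod k" by (simp add: mod_simps)
    ultimately have "(b + e + 1) mod k = 0" by simp
    then have "int k dvd int (b + e + 1)" by (metis dvd_imp_mod_0 mod_0_imp_dvd of_nat_dvd_iff)
    moreover have "int (b+1) - int a = int (b+e+1) - int k" using e by simp
    ultimately have "int k dvd (int (b + 1) - int a)" by (metis dvd_diff dvd_refl)
    then have "int (b+1) mod int k = int a mod int k" by (simp add: mod_eq_dvd_iff)
    then have "(b+1) mod k = a mod k" by (metis of_nat_eq_iff zmod_int)
    then show False using h ab by simp
  qed
  have i1: "(i+1) mod k = i'"
  proof -
    have "(d + c + p + 1) mod k = (d + c) mod k"
      by (rule mod_eqI[where t=1]) (use p in simp)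
    then show ?thesis by (simp add: i_def i'_def mod_simps)
  qed
  have jk: "j + 1 < k^2"
  proof -
    have "j + 1 \<le> u*k + k" using v1 by (simp add: j_def)
    moreover have "u*k + k \<le> k*k" using uk by (metis add.commute mult_Suc mult_le_mono1 Suc_leI)
    ultimately show ?thesis using v1 j_def by (simp add: power2_eq_square)
  qed
  have j1: "(j+1) mod k^2 = u*k + (v+1)" using jk by (simp add: j_def)
  have e1: "Aw k i j = a"
  proof -
    have "(b + p*(d+c)*(b+e) + (d+c+p)*(b+e)) mod k = a mod k"
      by (rule mod_eqI[where t="(int d + int c)*(int b + int e) + int b + int e - 1"])
         (simp only: of_nat_add of_nat_mult ip of_nat_1 of_nat_numeral, simp add: algebra_simps)
    moreover have "Aw k i j = (u + i*v) mod k" unfolding j_def using uk by (intro Aw_eval)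
    moreover have "(u + i*v) mod k = (b + p*(d+c)*(b+e) + (d+c+p)*(b+e)) mod k"
      unfolding u_def i_def i'_def v_def by (intro mod_add_cong mod_mult_cong mm; simp)
    ultimately show ?thesis using ab by simp
  qed
  have e2: "Aw k ((i+1) mod k) j = b"
  proof -
    have "(b + p*(d+c)*(b+e) + (d+c)*(b+e)) mod k = b mod k"
      by (rule mod_eqI[where t="(int d + int c)*(int b + int e)"])
         (simp only: of_nat_add of_nat_mult ip of_nat_1 of_nat_numeral, simp add: algebra_simps)
    moreover have "Aw k ((i+1) mod k) j = (u + i'*v) mod k" unfolding j_def i1 using uk by (intro Aw_eval)
    moreover have "(u + i'*v) mod k = (b + p*(d+c)*(b+e) + (d+c)*(b+e)) mod k"
      unfolding u_def i'_def v_def by (intro mod_add_cong mod_mult_cong mm; simp)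
    ultimately show ?thesis using ab by simp
  qed
  have e3: "Aw k ((i+1) mod k) ((j+1) mod k^2) = d"
  proof -
    have "(b + p*(d+c)*(b+e) + (d+c)*(b+e+1)) mod k = d mod k"
      by (rule mod_eqI[where t="(int d + int c)*(int b + int e) + 1"])
         (simp only: of_nat_add of_nat_mult ip of_nat_1 of_nat_numeral, simp add: algebra_simps)
    moreover have "Aw k ((i+1) mod k) ((j+1) mod k^2) = (u + i'*(v+1)) mod k" unfolding j1 i1 using v1 by (intro Aw_eval)
    moreover have "(u + i'*(v+1)) mod k = (b + p*(d+c)*(b+e) + (d+c)*(b+e+1)) mod k"
      unfolding u_def i'_def v_def by (intro mod_add_cong mod_mult_cong mm; simp)
    ultimately show ?thesis using ab by simp
  qed
  show ?thesis
  proof (rule bexI[where x="(i,j)"])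
    show "L_filling k (Aw k) (i, j) = (a, b, d)" by (simp only: L_filling_def prod.case e1 e2 e3)
    show "(i, j) \<in> L_positions k" using uk jk by (simp add: L_positions_def)
  qed
qed

theorem theorem2:
  fixes k :: nat
  assumes "k \<ge> 2"
  shows "\<exists>A. de_Bruijn_L_array k A"
proof -
  have k: "k \<ge> 2" by fact
  have kp: "0 < k" using k by simp
  let ?f = "L_filling k (Aw k)"
  let ?S = "L_positions k"
  let ?T = "{..<k} \<times> {..<k} \<times> {..<k}"
  have arr: "is_array k (Aw k)" using kp by (simp add: is_array_def Aw_def)
  have surj: "\<exists>p\<in>?S. ?f p = (a,b,d)" if "a < k" "b < k" "d < k" for a b d
    using surj_case1[OF k that] surj_case2[OF k that] by blast
  have sub: "?f ` ?S \<subseteq> ?T" using kp by (auto simp: L_filling_def Aw_def)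
  have img: "?f ` ?S = ?T"
  proof
    show "?T \<subseteq> ?f ` ?S"
    proof
      fix x assume "x \<in> ?T"
      then obtain a b d where x: "x = (a,b,d)" "a < k" "b < k" "d < k" by auto
      then obtain p where "p \<in> ?S" "?f p = (a,b,d)" using surj by blast
      then show "x \<in> ?f ` ?S" using x by force
    qed
  qed (rule sub)
  have fin: "finite ?S" by (simp add: L_positions_def)
  have "card ?S = card ?T" by (simp add: L_positions_def card_cartesian_product power2_eq_square)
  then have inj: "inj_on ?f ?S" using fin img by (metis eq_card_imp_inj_on)
  have "de_Bruijn_L_array k (Aw k)"
    unfolding de_Bruijn_L_array_def
  proof (intro conjI arr allI impI)
    fix a b d assume abd: "a < k" "b < k" "d < k"
    from surj[OF abd] obtain p where p: "p \<in> ?S" "?f p = (a,b,d)" by blast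
    show "\<exists>!p. p \<in> ?S \<and> ?f p = (a, b, d)"
    proof (rule ex1I[where a=p])
      show "p \<in> ?S \<and> ?f p = (a, b, d)" using p by simp
      fix q assume "q \<in> ?S \<and> ?f q = (a, b, d)"
      then show "q = p" using inj p unfolding inj_on_def by metis
    qed
  qed
  then show ?thesis by blast
qed

end
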